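(* Consider an execution of Algorithm msu1 on a CNF formula $\varphi$, and let $j\ge 1$. At the $j$-th call of the SAT oracle, either the working formula $\varphi_W$ is unsatisfiable, or every satisfying assignment of $\varphi_W$ assigns value 1 to exactly $j-1$ blocking variables.
   Context: Algorithm msu1 (Fu and Malik). Input: a CNF formula $\varphi$ (a finite set of clauses). All clauses of $\varphi$ are tagged non-auxiliary. The working formula is initialised to $\varphi_W:=\varphi$. Each iteration calls a SAT oracle on $\varphi_W$; the $j$-th such call is iteration $j$. If $\varphi_W$ is unsatisfiable, the oracle returns an unsatisfiable core $\varphi_C\subseteq\varphi_W$, i.e. a subset of the clauses of $\varphi_W$ that is itself unsatisfiable. Then, for each non-auxiliary clause $\omega\in\varphi_C$, a fresh variable $b$ (a blocking variable) is created and $\omega$ is replaced in $\varphi_W$ by $\omega\vee b$. The new clause is tagged non-auxiliary, and $b$ is associated with the original clause from which $\omega$ descends. Let $BV$ be the set of blocking variables created in this iteration. A CNF encoding of $\sum_{b\in BV} b=1$ is added to $\varphi_W$; its clauses are tagged auxiliary. This encoding may use additional auxiliary variables; an assignment to $BV$ extends to a satisfying assignment of the encoding iff exactly one variable of $BV$ is true. If $\varphi_W$ is satisfiable, the algorithm stops and returns $|\varphi|-\nu$, where $\nu$ is the number of blocking variables assigned value 1. *)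

theory Defs
  imports Main
begin

datatype 'v lit = Pos 'v | Neg 'v

type_synonym 'v clause = "'v lit set"
type_synonym 'v assignment = "'v \<Rightarrow> bool"

(* a tagged clause: (clause, is_auxiliary) *)
type_synonym 'v tclause = "'v clause \<times> bool"

fun lit_var :: "'v lit \<Rightarrow> 'v" where
  "lit_var (Pos v) = v" | "lit_var (Neg v) = v"

fun lit_sat :: "'v assignment \<Rightarrow> 'v lit \<Rightarrow> bool" where
  "lit_sat \<sigma> (Pos v) = \<sigma> v" | "lit_sat \<sigma> (Neg v) = (\<not> \<sigma> v)"

definition clause_sat :: "'v assignment \<Rightarrow> 'v clause \<Rightarrow> bool" where
  "clause_sat \<sigma> c \<longleftrightarrow> (\<exists>l\<in>c. lit_sat \<sigma> l)"

definition cnf_sat :: "'v assignment \<Rightarrow> 'v clause set \<Rightarrow> bool" where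
  "cnf_sat \<sigma> F \<longleftrightarrow> (\<forall>c\<in>F. clause_sat \<sigma> c)"

definition satisfiable :: "'v clause set \<Rightarrow> bool" where
  "satisfiable F \<longleftrightarrow> (\<exists>\<sigma>. cnf_sat \<sigma> F)"

definition clause_vars :: "'v clause set \<Rightarrow> 'v set" where
  "clause_vars F = (\<Union>c\<in>F. lit_var ` c)"

definition exactly_one_encoding :: "'v clause set \<Rightarrow> 'v set \<Rightarrow> bool" where
  "exactly_one_encoding E BV \<longleftrightarrow> finite E \<and> (\<forall>c\<in>E. finite c) \<and>
     (\<forall>\<sigma>. (\<exists>\<tau>. (\<forall>b\<in>BV. \<tau> b = \<sigma> b) \<and> cnf_sat \<tau> E) \<longleftrightarrow> card {b\<in>BV. \<sigma> b} = 1)"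

(* one iteration of msu1 after an unsatisfiable oracle call.
   State: (working formula as a set of tagged clauses, set of all blocking variables so far). *)
definition msu1_step :: "('v tclause set \<times> 'v set) \<Rightarrow> ('v tclause set \<times> 'v set) \<Rightarrow> bool" where
  "msu1_step s s' \<longleftrightarrow> (\<exists>C f E.
     let W = fst s; B = snd s; N = {c\<in>C. \<not> snd c}; BV = f ` N in
     C \<subseteq> W \<and> \<not> satisfiable (fst ` C) \<and>
     inj_on f N \<and> BV \<inter> clause_vars (fst ` W) = {} \<and>
     exactly_one_encoding E BV \<and>
     s' = ((W - N) \<union> {(insert (Pos (f c)) (fst c), False) | c. c \<in> N} \<union> {(e, True) | e. e \<in> E},
           B \<union> BV))"

(* msu1_iter phi j s : s is the state (working formula, blocking variables) at the j-th oracle call *)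
inductive msu1_iter :: "'v clause set \<Rightarrow> nat \<Rightarrow> ('v tclause set \<times> 'v set) \<Rightarrow> bool"
  for \<phi> :: "'v clause set" where
  init: "msu1_iter \<phi> 1 ({(c, False) | c. c \<in> \<phi>}, {})"
| step: "msu1_iter \<phi> j s \<Longrightarrow> \<not> satisfiable (fst ` fst s) \<Longrightarrow> msu1_step s s'
          \<Longrightarrow> msu1_iter \<phi> (Suc j) s'"

end

theory Submission
  imports Defs
begin

lemma lit_sat_upd: "lit_var l \<noteq> b \<Longrightarrow> lit_sat (\<sigma>(b := v)) l = lit_sat \<sigma> l"
  by (cases l) auto

lemma cnf_sat_upd: "b \<notin> clause_vars E \<Longrightarrow> cnf_sat (\<sigma>(b := v)) E = cnf_sat \<sigma> E"
  unfolding cnf_sat_def clause_sat_def clause_vars_def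
  by (metis (no_types, lifting) UN_I image_eqI lit_sat_upd)

lemma enc_vars:
  assumes enc: "exactly_one_encoding E BV" and sat: "cnf_sat \<sigma> E"
  shows "BV \<subseteq> clause_vars E"
proof
  fix b assume bBV: "b \<in> BV"
  show "b \<in> clause_vars E"
  proof (rule ccontr)
    assume nb: "b \<notin> clause_vars E"
    have key: "\<And>\<rho>. cnf_sat \<rho> E \<Longrightarrow> card {b\<in>BV. \<rho> b} = 1"
      using enc unfolding exactly_one_encoding_def by blast
    have c1: "card {b\<in>BV. \<sigma> b} = 1" using key sat .
    let ?s = "\<sigma>(b := \<not> \<sigma> b)"
    have "cnf_sat ?s E" using cnf_sat_upd[OF nb] sat by simp
    then have c2: "card {b\<in>BV. ?s b} = 1" using key by blast
    from c1 obtain b0 where b0: "{b\<in>BV. \<sigma> b} = {b0}" using card_1_singletonE by blast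
    show False
    proof (cases "b = b0")
      case True
      then have "{b\<in>BV. ?s b} = {}" using b0 by auto
      then show False using c2 by (metis card.empty zero_neq_one)
    next
      case False
      then have "\<not> \<sigma> b" using b0 bBV by auto
      then have "{b\<in>BV. ?s b} = {b0, b}" using b0 bBV False by auto
      then show False using c2 False by simp
    qed
  qed
qed

definition Inv :: "nat \<Rightarrow> 'v tclause set \<Rightarrow> 'v set \<Rightarrow> bool" where
  "Inv n W B \<longleftrightarrow> (\<exists>Es BVs. (\<forall>k<n. exactly_one_encoding (Es k) (BVs k) \<and> (\<forall>e\<in>Es k. (e, True) \<in> W))
     \<and> B = (\<Union>k<n. BVs k)
     \<and> ((\<forall>k<n. satisfiable (Es k)) \<longrightarrow> (\<forall>k<n. \<forall>l<n. k \<noteq> l \<longrightarrow> BVs k \<inter> BVs l = {})))"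

lemma vars_mono: "A \<subseteq> B \<Longrightarrow> clause_vars A \<subseteq> clause_vars B"
  unfolding clause_vars_def by auto

lemma inv_step:
  assumes I: "Inv n (fst s) (snd s)" and st: "msu1_step s s'"
  shows "Inv (Suc n) (fst s') (snd s')"
proof -
  obtain W B where s: "s = (W, B)" by (cases s)
  from st obtain C f E where
    C: "C \<subseteq> W" and dis: "f ` {c\<in>C. \<not> snd c} \<inter> clause_vars (fst ` W) = {}"
    and enc: "exactly_one_encoding E (f ` {c\<in>C. \<not> snd c})"
    and s': "s' = ((W - {c\<in>C. \<not> snd c}) \<union> {(insert (Pos (f c)) (fst c), False) | c. c \<in> {c\<in>C. \<not> snd c}} \<union> {(e, True) | e. e \<in> E},
           B \<union> f ` {c\<in>C. \<not> snd c})"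
    unfolding msu1_step_def s Let_def by auto
  define BV where "BV = f ` {c\<in>C. \<not> snd c}"
  from I obtain Es BVs where
    I1: "\<forall>k<n. exactly_one_encoding (Es k) (BVs k) \<and> (\<forall>e\<in>Es k. (e, True) \<in> W)"
    and I2: "B = (\<Union>k<n. BVs k)"
    and I3: "(\<forall>k<n. satisfiable (Es k)) \<longrightarrow> (\<forall>k<n. \<forall>l<n. k \<noteq> l \<longrightarrow> BVs k \<inter> BVs l = {})"
    unfolding Inv_def s by auto
  let ?Es = "Es(n := E)" and ?BVs = "BVs(n := BV)"
  have A1: "\<forall>k<Suc n. exactly_one_encoding (?Es k) (?BVs k) \<and> (\<forall>e\<in>?Es k. (e, True) \<in> fst s')"
    using I1 enc unfolding s' BV_def by (auto simp: less_Suc_eq)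
  have A2: "snd s' = (\<Union>k<Suc n. ?BVs k)"
    using I2 unfolding s' BV_def by (auto simp: lessThan_Suc)
  have A3: "(\<forall>k<Suc n. satisfiable (?Es k)) \<longrightarrow> (\<forall>k<Suc n. \<forall>l<Suc n. k \<noteq> l \<longrightarrow> ?BVs k \<inter> ?BVs l = {})"
  proof (intro impI allI)
    fix k l assume sa: "\<forall>k<Suc n. satisfiable (?Es k)" and kl: "k < Suc n" "l < Suc n" "k \<noteq> l"
    have old: "\<forall>k<n. satisfiable (Es k)"
    proof (intro allI impI)
      fix k assume "k < n"
      then show "satisfiable (Es k)" using sa[rule_format, of k] by simp
    qed
    have sub: "\<And>k. k < n \<Longrightarrow> BVs k \<inter> BV = {}"
    proof -
      fix k assume k: "k < n"
      from old k obtain \<sigma> where "cnf_sat \<sigma> (Es k)" unfolding satisfiable_def by auto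
      then have "BVs k \<subseteq> clause_vars (Es k)" using enc_vars I1 k by blast
      also have "\<dots> \<subseteq> clause_vars (fst ` W)"
        apply (rule vars_mono) using I1 k by force
      finally show "BVs k \<inter> BV = {}" using dis unfolding BV_def by blast
    qed
    show "?BVs k \<inter> ?BVs l = {}"
      using kl I3 old sub by (auto simp: less_Suc_eq) blast+
  qed
  show ?thesis unfolding Inv_def using A1 A2 A3 by blast
qed

lemma iter_inv: "msu1_iter \<phi> j s \<Longrightarrow> j \<ge> 1 \<and> Inv (j - 1) (fst s) (snd s)"
proof (induction rule: msu1_iter.induct)
  case init
  then show ?case unfolding Inv_def by auto
next
  case (step j s s')
  then show ?case using inv_step by fastforce
qed

theorem proposition2:
  fixes \<phi> :: "'v clause set" and W :: "'v tclause set" and B :: "'v set"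
  assumes "finite \<phi>" and "\<forall>c\<in>\<phi>. finite c"
    and "j \<ge> 1"
    and "msu1_iter \<phi> j (W, B)"
  shows "\<not> satisfiable (fst ` W) \<or>
         (\<forall>\<sigma>. cnf_sat \<sigma> (fst ` W) \<longrightarrow> card {b\<in>B. \<sigma> b} = j - 1)"
proof -
  from iter_inv[OF assms(4)] obtain Es BVs where
    I1: "\<forall>k<j-1. exactly_one_encoding (Es k) (BVs k) \<and> (\<forall>e\<in>Es k. (e, True) \<in> W)"
    and I2: "B = (\<Union>k<j-1. BVs k)"
    and I3: "(\<forall>k<j-1. satisfiable (Es k)) \<longrightarrow> (\<forall>k<j-1. \<forall>l<j-1. k \<noteq> l \<longrightarrow> BVs k \<inter> BVs l = {})"
    unfolding Inv_def by auto
  have "card {b\<in>B. \<sigma> b} = j - 1" if sat: "cnf_sat \<sigma> (fst ` W)" for \<sigma>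
  proof -
    have satk: "\<And>k. k < j-1 \<Longrightarrow> cnf_sat \<sigma> (Es k)"
      using sat I1 unfolding cnf_sat_def by force
    have c1: "\<And>k. k < j-1 \<Longrightarrow> card {b\<in>BVs k. \<sigma> b} = 1"
      using satk I1 unfolding exactly_one_encoding_def by blast
    have disj: "\<forall>k<j-1. \<forall>l<j-1. k \<noteq> l \<longrightarrow> BVs k \<inter> BVs l = {}"
      using I3 satk unfolding satisfiable_def by blast
    have eq: "{b\<in>B. \<sigma> b} = (\<Union>k\<in>{..<j-1}. {b\<in>BVs k. \<sigma> b})" using I2 by auto
    have "card (\<Union>k\<in>{..<j-1}. {b\<in>BVs k. \<sigma> b}) = (\<Sum>k\<in>{..<j-1}. card {b\<in>BVs k. \<sigma> b})"
      apply (rule card_UN_disjoint)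
        apply simp
       apply (metis c1 card.infinite lessThan_iff zero_neq_one)
      using disj by auto
    also have "\<dots> = j - 1" using c1 by simp
    finally show ?thesis using eq by simp
  qed
  then show ?thesis by blast
qed

end
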